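(* Let $k\ge1$, $t\ge0$ and $n\ge k+t$ be integers, and let $F$ be a monotone $t$-admissible $k$-CNF formula on $n$ variables with $|\mathrm{sat}_t(F)|=S(n,t,k)$. Suppose no clause of $F$ is redundant, i.e. removing any single clause from $F$ yields a formula that is not $t$-admissible. Then every clause of $F$ has width exactly $k$.
   Context: A $k$-CNF formula is a conjunction of clauses (disjunctions of literals) each of width (number of literals) at most $k$; it is monotone if no literal is negated. $\mathrm{sat}_t(F)$ is the set of satisfying assignments of Hamming weight exactly $t$; $F$ is $t$-admissible if it has no satisfying assignment of Hamming weight less than $t$; $S(n,t,k)$ is the maximum of $|\mathrm{sat}_t(F)|$ over all $t$-admissible $k$-CNF formulas $F$ on $n$ variables. *)

theory Defs
  imports Main
begin

text \<open>Variables are natural numbers; a formula on n variables uses variables 0..n-1.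
A literal is a pair (v, b): b = True means the positive literal x_v, b = False means its negation.
An assignment is identified with the set of variables it sets to true;
its Hamming weight is the cardinality of that set.\<close>

type_synonym literal = "nat \<times> bool"
type_synonym clause = "literal set"
type_synonym cnf = "clause set"

definition width :: "clause \<Rightarrow> nat" where
  "width C = card C"

definition clause_sat :: "nat set \<Rightarrow> clause \<Rightarrow> bool" where
  "clause_sat A C \<longleftrightarrow> (\<exists>(v, b) \<in> C. (v \<in> A) = b)"

definition cnf_sat :: "nat set \<Rightarrow> cnf \<Rightarrow> bool" where
  "cnf_sat A F \<longleftrightarrow> (\<forall>C \<in> F. clause_sat A C)"

definition is_kCNF :: "nat \<Rightarrow> nat \<Rightarrow> cnf \<Rightarrow> bool" where
  "is_kCNF n k F \<longleftrightarrow> finite F \<and>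
     (\<forall>C \<in> F. finite C \<and> width C \<le> k \<and> (\<forall>(v, b) \<in> C. v < n))"

definition monotone_cnf :: "cnf \<Rightarrow> bool" where
  "monotone_cnf F \<longleftrightarrow> (\<forall>C \<in> F. \<forall>(v, b) \<in> C. b)"

definition sat_t :: "nat \<Rightarrow> nat \<Rightarrow> cnf \<Rightarrow> nat set set" where
  "sat_t n t F = {A. A \<subseteq> {0..<n} \<and> card A = t \<and> cnf_sat A F}"

definition admissible :: "nat \<Rightarrow> nat \<Rightarrow> cnf \<Rightarrow> bool" where
  "admissible n t F \<longleftrightarrow> (\<forall>A. A \<subseteq> {0..<n} \<and> card A < t \<longrightarrow> \<not> cnf_sat A F)"

definition S :: "nat \<Rightarrow> nat \<Rightarrow> nat \<Rightarrow> nat" where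
  "S n t k = Max {card (sat_t n t F) | F. is_kCNF n k F \<and> admissible n t F}"

end

theory Submission
  imports Defs
begin

theorem lemma6:
  fixes n t k :: nat and F :: cnf
  assumes "k \<ge> 1" and "n \<ge> k + t"
    and "is_kCNF n k F" and "monotone_cnf F" and "admissible n t F"
    and "card (sat_t n t F) = S n t k"
    and "\<forall>C \<in> F. \<not> admissible n t (F - {C})"
  shows "\<forall>C \<in> F. width C = k"
proof (rule ccontr)
  assume "\<not> (\<forall>C \<in> F. width C = k)"
  then obtain C where CF: "C \<in> F" and wC: "width C \<noteq> k" by blast
  have kc: "finite F" "finite C" "card C \<le> k" "\<forall>(v, b) \<in> C. v < n"
    using assms(3) CF unfolding is_kCNF_def width_def by auto
  have wlt: "card C < k" using kc wC unfolding width_def by simp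
  have monC: "\<forall>(v, b) \<in> C. b" using assms(4) CF unfolding monotone_cnf_def by auto
  obtain A where A: "A \<subseteq> {0..<n}" "card A < t" "cnf_sat A (F - {C})"
    using assms(7) CF unfolding admissible_def by blast
  have finA: "finite A" using A(1) finite_subset by blast
  have nCA: "\<not> clause_sat A C"
  proof
    assume "clause_sat A C"
    with A(3) have "cnf_sat A F" unfolding cnf_sat_def by auto
    with A(1,2) assms(5) show False unfolding admissible_def by blast
  qed
  define VC where "VC = fst ` C"
  have AVC: "A \<inter> VC = {}"
  proof (rule ccontr)
    assume "A \<inter> VC \<noteq> {}"
    then obtain v where v: "v \<in> A" "v \<in> VC" by blast
    then obtain p where p: "p \<in> C" "v = fst p" unfolding VC_def by blast
    have "snd p" using monC p(1) by auto
    hence "clause_sat A C" using p v(1) unfolding clause_sat_def by (intro bexI[of _ p]) (auto simp: case_prod_beta)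
    with nCA show False by simp
  qed
  define R where "R = {0..<n} - VC - A"
  have cVC: "card VC \<le> card C" unfolding VC_def using kc(2) card_image_le by blast
  have finVA: "finite (VC \<union> A)" using kc(2) finA unfolding VC_def by simp
  have "card R = card ({0..<n} - (VC \<union> A))" unfolding R_def by (simp add: Diff_Un set_diff_eq Diff_Int_distrib)
  also have "\<dots> \<ge> card {0..<n} - card (VC \<union> A)" by (rule diff_card_le_card_Diff[OF finVA])
  finally have c1: "card R \<ge> n - card (VC \<union> A)" by simp
  moreover have "card (VC \<union> A) \<le> card VC + card A" by (rule card_Un_le)
  ultimately have "card R \<ge> t - card A" using cVC wlt assms(2) by linarith
  then obtain T where T: "T \<subseteq> R" "card T = t - card A" "finite T"
    by (rule obtain_subset_with_card_n)
  define Y where "Y = A \<union> T"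
  have TA: "T \<inter> A = {}" using T(1) unfolding R_def by blast
  have cY: "card Y = t" unfolding Y_def using card_Un_disjoint[OF finA T(3)] TA A(2) T(2)
    by (simp add: Int_commute)
  have Ysub: "Y \<subseteq> {0..<n}" unfolding Y_def using A(1) T(1) unfolding R_def by blast
  have YVC: "Y \<inter> VC = {}" unfolding Y_def using AVC T(1) unfolding R_def by blast
  have finY: "finite Y" unfolding Y_def using finA T(3) by simp
  define F' where "F' = (F - {C}) \<union> (\<lambda>y. insert (y, True) C) ` Y"
  have kF': "is_kCNF n k F'"
    unfolding is_kCNF_def F'_def width_def
  proof (rule conjI)
    show "finite (F - {C} \<union> (\<lambda>y. insert (y, True) C) ` Y)" using kc(1) finY by simp
  next
    show "\<forall>D\<in>F - {C} \<union> (\<lambda>y. insert (y, True) C) ` Y. finite D \<and> card D \<le> k \<and> (\<forall>(v, b)\<in>D. v < n)"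
    proof
    fix D assume D: "D \<in> F - {C} \<union> (\<lambda>y. insert (y, True) C) ` Y"
    show "finite D \<and> card D \<le> k \<and> (\<forall>(v, b)\<in>D. v < n)"
    proof (cases "D \<in> F - {C}")
      case True thus ?thesis using assms(3) unfolding is_kCNF_def width_def by auto
    next
      case False
      then obtain y where y: "y \<in> Y" "D = insert (y, True) C" using D by blast
      have "card D \<le> Suc (card C)" unfolding y(2) using kc(2) by (simp add: card_insert_if)
      moreover have "finite D" unfolding y(2) using kc(2) by simp
      moreover have "\<forall>(v, b)\<in>D. v < n"
      proof
        fix p assume "p \<in> D"
        hence "p = (y, True) \<or> p \<in> C" using y(2) by blast
        thus "case p of (v, b) \<Rightarrow> v < n"
        proof
          assume "p = (y, True)" thus ?thesis using y(1) Ysub by auto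
        next
          assume "p \<in> C" thus ?thesis using kc(4) by blast
        qed
      qed
      ultimately show ?thesis using wlt by simp
    qed
    qed
  qed
  have adm': "admissible n t F'"
    unfolding admissible_def
  proof (intro allI impI notI)
    fix B assume B: "B \<subseteq> {0..<n} \<and> card B < t" and sB: "cnf_sat B F'"
    have s1: "cnf_sat B (F - {C})" using sB unfolding F'_def cnf_sat_def by auto
    have nCB: "\<not> clause_sat B C"
    proof
      assume "clause_sat B C"
      with s1 have "cnf_sat B F" unfolding cnf_sat_def by auto
      with B assms(5) show False unfolding admissible_def by blast
    qed
    have "Y \<subseteq> B"
    proof
      fix y assume "y \<in> Y"
      hence "clause_sat B (insert (y, True) C)" using sB unfolding F'_def cnf_sat_def by auto
      thus "y \<in> B" using nCB unfolding clause_sat_def by auto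
    qed
    hence "card Y \<le> card B" using B finite_subset card_mono by blast
    with cY B show False by simp
  qed
  have sub: "sat_t n t F \<subseteq> sat_t n t F'"
  proof
    fix X assume "X \<in> sat_t n t F"
    hence X: "X \<subseteq> {0..<n}" "card X = t" "cnf_sat X F" unfolding sat_t_def by auto
    have "clause_sat X C" using X(3) CF unfolding cnf_sat_def by auto
    hence "cnf_sat X F'" using X(3) unfolding F'_def cnf_sat_def clause_sat_def by auto
    thus "X \<in> sat_t n t F'" using X unfolding sat_t_def by auto
  qed
  have YF': "Y \<in> sat_t n t F'"
  proof -
    have "cnf_sat Y (F - {C})" unfolding cnf_sat_def
    proof
      fix D assume D: "D \<in> F - {C}"
      then obtain v b where vb: "(v, b) \<in> D" "(v \<in> A) = b"
        using A(3) unfolding cnf_sat_def clause_sat_def by blast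
      have "b" using assms(4) D vb(1) unfolding monotone_cnf_def by auto
      hence "v \<in> Y" using vb unfolding Y_def by auto
      thus "clause_sat Y D" using vb \<open>b\<close> unfolding clause_sat_def by auto
    qed
    hence "cnf_sat Y F'" unfolding F'_def cnf_sat_def clause_sat_def by auto
    thus ?thesis using Ysub cY unfolding sat_t_def by auto
  qed
  have YnF: "Y \<notin> sat_t n t F"
  proof
    assume "Y \<in> sat_t n t F"
    hence "clause_sat Y C" using CF unfolding sat_t_def cnf_sat_def by auto
    then obtain v b where "(v, b) \<in> C" "(v \<in> Y) = b" unfolding clause_sat_def by blast
    moreover have "v \<in> VC" using \<open>(v, b) \<in> C\<close> unfolding VC_def by (metis fst_conv image_eqI)
    ultimately show False using monC YVC by auto
  qed
  have finS': "finite (sat_t n t F')"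
    by (rule finite_subset[of _ "Pow {0..<n}"]) (auto simp: sat_t_def)
  have lt: "card (sat_t n t F) < card (sat_t n t F')"
    using sub YF' YnF finS' by (intro psubset_card_mono) blast+
  define M where "M = {card (sat_t n t G) | G. is_kCNF n k G \<and> admissible n t G}"
  have finM: "finite M"
  proof (rule finite_subset[of _ "{..card (Pow {0..<n::nat})}"])
    show "M \<subseteq> {..card (Pow {0..<n})}"
    proof
      fix m assume "m \<in> M"
      then obtain G where "m = card (sat_t n t G)" unfolding M_def by blast
      moreover have "sat_t n t G \<subseteq> Pow {0..<n}" unfolding sat_t_def by auto
      ultimately show "m \<in> {..card (Pow {0..<n})}" by (simp add: card_mono)
    qed
  qed simp
  have "card (sat_t n t F') \<in> M" unfolding M_def using kF' adm' by blast
  hence "card (sat_t n t F') \<le> S n t k" unfolding S_def M_def[symmetric] using finM by simp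
  with lt assms(6) show False by simp
qed

end
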